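(* Let $m$ be an even positive integer. The right cosets $\Gamma_0(2)^+\gamma$ for $\gamma\in M^m$ are pairwise distinct.
   Context: Matrices are elements of $GL_2^+(\mathbb{R})$ considered up to sign. $\Gamma_0(2)=\{\begin{bmatrix}a&b\\c&d\end{bmatrix}\in SL_2(\mathbb{Z}): c\equiv0\pmod 2\}$, $w_2=2^{-1/2}\begin{bmatrix}0&-1\\2&0\end{bmatrix}$, $\Gamma_0(2)^+$ is the group generated by $\Gamma_0(2)$ and $w_2$. With integers $x,z>0$, $y$: $M_1^m=\{\begin{bmatrix}x&y\\0&z\end{bmatrix}: xz=m,\ 0\leq y<z,\ \gcd(x,y,z)=1,\ x\text{ odd}\}$, $S_1^m=\{\begin{bmatrix}x&y\\0&z\end{bmatrix}: xz=m,\ 0\leq y<z,\ \gcd(x,y,z)=1,\ z\text{ odd}\}$, $S_2^m=\{2^{-1/2}\begin{bmatrix}x&y\\0&z\end{bmatrix}: xz=2m,\ 0\leq y<z,\ \gcd(x,y,z)=1,\ x,z\text{ even}\}$, $M^m=M_1^m\cup S_1^m\cup S_2^m$. *)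

theory Defs
  imports "HOL-Analysis.Analysis"
begin

type_synonym mat2 = "real^2^2"

definition mk2 :: "real \<Rightarrow> real \<Rightarrow> real \<Rightarrow> real \<Rightarrow> mat2" where
  "mk2 a b c d = vector [vector [a, b], vector [c, d]]"

definition Gamma0_2 :: "mat2 set" where
  "Gamma0_2 = {mk2 (of_int a) (of_int b) (of_int c) (of_int d) | a b c d :: int.
                 a * d - b * c = 1 \<and> even c}"

definition w2 :: mat2 where
  "w2 = mk2 0 (- 1 / sqrt 2) (2 / sqrt 2) 0"

text \<open>The subgroup of GL_2(R) generated by Gamma_0(2) and w_2.
  Since -I lies in Gamma_0(2), working modulo sign changes nothing.\<close>
inductive_set Gamma0_2_plus :: "mat2 set" where
  gen_Gamma: "g \<in> Gamma0_2 \<Longrightarrow> g \<in> Gamma0_2_plus"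
| gen_w2: "w2 \<in> Gamma0_2_plus"
| mult: "g \<in> Gamma0_2_plus \<Longrightarrow> h \<in> Gamma0_2_plus \<Longrightarrow> g ** h \<in> Gamma0_2_plus"
| inv: "g \<in> Gamma0_2_plus \<Longrightarrow> matrix_inv g \<in> Gamma0_2_plus"

definition M1 :: "int \<Rightarrow> mat2 set" where
  "M1 m = {mk2 (of_int x) (of_int y) 0 (of_int z) | x y z :: int.
             x > 0 \<and> z > 0 \<and> x * z = m \<and> 0 \<le> y \<and> y < z \<and> gcd x (gcd y z) = 1 \<and> odd x}"

definition S1 :: "int \<Rightarrow> mat2 set" where
  "S1 m = {mk2 (of_int x) (of_int y) 0 (of_int z) | x y z :: int.
             x > 0 \<and> z > 0 \<and> x * z = m \<and> 0 \<le> y \<and> y < z \<and> gcd x (gcd y z) = 1 \<and> odd z}"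

definition S2 :: "int \<Rightarrow> mat2 set" where
  "S2 m = {mk2 (of_int x / sqrt 2) (of_int y / sqrt 2) 0 (of_int z / sqrt 2) | x y z :: int.
             x > 0 \<and> z > 0 \<and> x * z = 2 * m \<and> 0 \<le> y \<and> y < z \<and> gcd x (gcd y z) = 1
             \<and> even x \<and> even z}"

definition Mm :: "int \<Rightarrow> mat2 set" where
  "Mm m = M1 m \<union> S1 m \<union> S2 m"

definition right_coset :: "mat2 set \<Rightarrow> mat2 \<Rightarrow> mat2 set" where
  "right_coset G g = {h ** g | h. h \<in> G}"

end

theory Submission
  imports Defs
begin

lemma mk2_nth[simp]: "mk2 a b c d $ 1 $ 1 = a" "mk2 a b c d $ 1 $ 2 = b"
  "mk2 a b c d $ 2 $ 1 = c" "mk2 a b c d $ 2 $ 2 = d"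
  by (simp_all add: mk2_def)

lemma mk2_eq_iff: "mk2 a b c d = mk2 a' b' c' d' \<longleftrightarrow> a = a' \<and> b = b' \<and> c = c' \<and> d = d'"
  by (auto simp: vec_eq_iff forall_2 mk2_def)

lemma mk2_mult: "mk2 a b c d ** mk2 a' b' c' d' =
   mk2 (a*a'+b*c') (a*b'+b*d') (c*a'+d*c') (c*b'+d*d')"
  by (simp add: vec_eq_iff forall_2 sum_2 matrix_matrix_mult_def)

lemma mat1_mk2: "mat 1 = mk2 1 0 0 1"
  by (simp add: vec_eq_iff forall_2 mat_def)

lemma mk2_inv: assumes "a*d - b*c = 1"
  shows "matrix_inv (mk2 a b c d) = mk2 d (-b) (-c) a"
proof -
  have e: "mk2 a b c d ** mk2 d (-b) (-c) a = mat 1 \<and> mk2 d (-b) (-c) a ** mk2 a b c d = mat 1"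
    using assms by (simp add: mk2_mult mat1_mk2 mk2_eq_iff algebra_simps)
  have u: "B = mk2 d (-b) (-c) a" if "mk2 a b c d ** B = mat 1 \<and> B ** mk2 a b c d = mat 1" for B
  proof -
    have "B = (mk2 d (-b) (-c) a ** mk2 a b c d) ** B" using e by simp
    also have "\<dots> = mk2 d (-b) (-c) a" using that by (simp add: matrix_mul_assoc[symmetric])
    finally show ?thesis .
  qed
  show ?thesis unfolding matrix_inv_def
    using e u by (intro some_equality) blast+
qed

lemma no_sqrt2: fixes x y :: nat shows "x > 0 \<Longrightarrow> 2 * x^2 \<noteq> y^2"
proof (induction x arbitrary: y rule: less_induct)
  case (less x)
  show ?case
  proof
    assume h: "2*x^2 = y^2"
    then have "even (y^2)" by presburger
    then have "even y" by simp
    then obtain k where k: "y = 2*k" by blast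
    with h have h2: "x^2 = 2*k^2" by (simp add: power_mult_distrib)
    have "k > 0"
    proof (rule ccontr)
      assume "\<not> k > 0" then have "k = 0" by simp
      with h2 have "x^2 = 0" by simp
      with less.prems show False by simp
    qed
    have "k < x"
    proof (rule ccontr)
      assume "\<not> k < x" then have "x \<le> k" by simp
      then have "x^2 \<le> k^2" by (simp add: power_mono)
      with h2 `k>0` show False by simp
    qed
    from less.IH[OF this `k>0`, of x] h2 show False by simp
  qed
qed

lemma no_sqrt2_int: fixes x y :: int shows "x > 0 \<Longrightarrow> 2 * x^2 \<noteq> y^2"
proof
  assume "x > 0" "2 * x^2 = y^2"
  then have "int (2 * (nat x)^2) = int ((nat \<bar>y\<bar>)^2)" by simp
  then have "2 * (nat x)^2 = (nat \<bar>y\<bar>)^2" by (simp only: of_nat_eq_iff)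
  with no_sqrt2[of "nat x" "nat \<bar>y\<bar>"] `x > 0` show False by simp
qed

lemma no_sqrt2_real: fixes x y :: int shows "x > 0 \<Longrightarrow> of_int x * sqrt 2 \<noteq> of_int y"
proof
  assume "x > 0" "of_int x * sqrt 2 = of_int y"
  then have "(of_int x * sqrt 2)^2 = (of_int y :: real)^2" by simp
  then have "of_int (2 * x^2) = (of_int (y^2) :: real)" by (simp add: power_mult_distrib)
  then have "2 * x^2 = y^2" by (simp only: of_int_eq_iff)
  with no_sqrt2_int `x > 0` show False by blast
qed

definition G2 :: "mat2 set" where
  "G2 = {mk2 (sqrt 2 * of_int a) (of_int b / sqrt 2) (sqrt 2 * of_int c) (sqrt 2 * of_int d) | a b c d :: int.
     2*a*d - b*c = 1}"

lemma G1I: "a*d - b*c = 1 \<Longrightarrow> even c \<Longrightarrow> M = mk2 (of_int a) (of_int b) (of_int c) (of_int d) \<Longrightarrow> M \<in> Gamma0_2"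
  unfolding Gamma0_2_def by blast

lemma G2I: "2*a*d - b*c = 1 \<Longrightarrow> M = mk2 (sqrt 2 * of_int a) (of_int b / sqrt 2) (sqrt 2 * of_int c) (sqrt 2 * of_int d) \<Longrightarrow> M \<in> G2"
  unfolding G2_def by blast

lemma s2: "sqrt 2 * sqrt 2 = (2::real)" by simp

lemma closed: "g \<in> Gamma0_2_plus \<Longrightarrow> g \<in> Gamma0_2 \<union> G2"
proof (induction rule: Gamma0_2_plus.induct)
  case (gen_Gamma g) then show ?case by simp
next
  case gen_w2
  have "w2 \<in> G2"
    by (rule G2I[of 0 0 "-1" 1], simp, simp add: w2_def mk2_eq_iff field_simps)
  then show ?case by simp
next
  case (mult g h)
  show ?case
  proof (cases "g \<in> Gamma0_2")
    case True
    then obtain a b c d where g: "g = mk2 (of_int a) (of_int b) (of_int c) (of_int d)" "a*d-b*c = 1" "even c"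
      unfolding Gamma0_2_def by blast
    then obtain k where k: "c = 2*k" by blast
    show ?thesis
    proof (cases "h \<in> Gamma0_2")
      case True
      then obtain a' b' c' d' where h: "h = mk2 (of_int a') (of_int b') (of_int c') (of_int d')" "a'*d'-b'*c' = 1" "even c'"
        unfolding Gamma0_2_def by blast
      have "g ** h \<in> Gamma0_2"
        apply (rule G1I[of "a*a'+b*c'" "c*b'+d*d'" "a*b'+b*d'" "c*a'+d*c'"])
        subgoal using g(2) h(2) by algebra
        subgoal using g(3) h(3) by simp
        subgoal by (simp add: g h mk2_mult)
        done
      then show ?thesis by simp
    next
      case False
      with mult have "h \<in> G2" by simp
      then obtain a' b' c' d' where h: "h = mk2 (sqrt 2 * of_int a') (of_int b' / sqrt 2) (sqrt 2 * of_int c') (sqrt 2 * of_int d')" "2*a'*d'-b'*c' = 1"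
        unfolding G2_def by blast
      have "g ** h \<in> G2"
        apply (rule G2I[of "a*a'+b*c'" "k*b'+d*d'" "a*b'+2*b*d'" "c*a'+d*c'"])
        subgoal using g(2) h(2) k by algebra
        subgoal by (simp add: g h k mk2_mult mk2_eq_iff field_simps)
        done
      then show ?thesis by simp
    qed
  next
    case False
    with mult have "g \<in> G2" by simp
    then obtain a b c d where g: "g = mk2 (sqrt 2 * of_int a) (of_int b / sqrt 2) (sqrt 2 * of_int c) (sqrt 2 * of_int d)" "2*a*d-b*c = 1"
        unfolding G2_def by blast
    show ?thesis
    proof (cases "h \<in> Gamma0_2")
      case True
      then obtain a' b' c' d' where h: "h = mk2 (of_int a') (of_int b') (of_int c') (of_int d')" "a'*d'-b'*c' = 1" "even c'"
        unfolding Gamma0_2_def by blast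
      then obtain k where k: "c' = 2*k" by blast
      have "g ** h \<in> G2"
        apply (rule G2I[of "a*a'+b*k" "c*b'+d*d'" "2*a*b'+b*d'" "c*a'+d*c'"])
        subgoal using g(2) h(2) k by algebra
        subgoal by (simp add: g h k mk2_mult mk2_eq_iff field_simps)
        done
      then show ?thesis by simp
    next
      case False
      with mult have "h \<in> G2" by simp
      then obtain a' b' c' d' where h: "h = mk2 (sqrt 2 * of_int a') (of_int b' / sqrt 2) (sqrt 2 * of_int c') (sqrt 2 * of_int d')" "2*a'*d'-b'*c' = 1"
        unfolding G2_def by blast
      have "g ** h \<in> Gamma0_2"
        apply (rule G1I[of "2*a*a'+b*c'" "c*b'+2*d*d'" "a*b'+b*d'" "2*c*a'+2*d*c'"])
        subgoal using g(2) h(2) by algebra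
        subgoal by simp
        subgoal by (simp add: g h mk2_mult mk2_eq_iff field_simps)
        done
      then show ?thesis by simp
    qed
  qed
next
  case (inv g)
  show ?case
  proof (cases "g \<in> Gamma0_2")
    case True
    then obtain a b c d where g: "g = mk2 (of_int a) (of_int b) (of_int c) (of_int d)" "a*d-b*c = 1" "even c"
      unfolding Gamma0_2_def by blast
    have "(of_int a) * (of_int d) - (of_int b) * (of_int c) = (1::real)"
      using g(2) by (metis of_int_1 of_int_diff of_int_mult)
    then have "matrix_inv g = mk2 (of_int d) (- of_int b) (- of_int c) (of_int a)"
      by (simp add: g mk2_inv)
    moreover have "\<dots> \<in> Gamma0_2"
      by (rule G1I[of d a "-b" "-c"]) (use g in \<open>auto simp: algebra_simps\<close>)
    ultimately show ?thesis by simp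
  next
    case False
    with inv have "g \<in> G2" by simp
    then obtain a b c d where g: "g = mk2 (sqrt 2 * of_int a) (of_int b / sqrt 2) (sqrt 2 * of_int c) (sqrt 2 * of_int d)" "2*a*d-b*c = 1"
        unfolding G2_def by blast
    have "(sqrt 2 * of_int a) * (sqrt 2 * of_int d) - (of_int b / sqrt 2) * (sqrt 2 * of_int c) = (1::real)"
    proof -
      have "(sqrt 2 * of_int a) * (sqrt 2 * of_int d) - (of_int b / sqrt 2) * (sqrt 2 * of_int c)
          = (of_int (2*a*d - b*c) :: real)" by simp
      then show ?thesis using g(2) by simp
    qed
    then have "matrix_inv g = mk2 (sqrt 2 * of_int d) (- (of_int b / sqrt 2)) (- (sqrt 2 * of_int c)) (sqrt 2 * of_int a)"
      by (simp add: g mk2_inv)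
    moreover have "\<dots> \<in> G2"
      by (rule G2I[of d a "-b" "-c"]) (use g in \<open>auto simp: algebra_simps\<close>)
    ultimately show ?thesis by simp
  qed
qed


lemma Mm_form:
  assumes "g \<in> Mm m"
  shows "\<exists>s x y z. (s = 1 \<or> s = 1 / sqrt 2) \<and> x > 0 \<and> z > 0 \<and> 0 \<le> y \<and> y < z \<and>
     g = mk2 (s * of_int x) (s * of_int y) 0 (s * of_int z)"
proof -
  have "g \<in> M1 m \<or> g \<in> S1 m \<or> g \<in> S2 m" using assms unfolding Mm_def by blast
  then show ?thesis
  proof (elim disjE)
    assume "g \<in> M1 m"
    then obtain x y z where "x > 0" "z > 0" "0 \<le> y" "y < z" "g = mk2 (of_int x) (of_int y) 0 (of_int z)"
      unfolding M1_def by blast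
    then show ?thesis by (intro exI[of _ 1] exI[of _ x] exI[of _ y] exI[of _ z]) simp
  next
    assume "g \<in> S1 m"
    then obtain x y z where "x > 0" "z > 0" "0 \<le> y" "y < z" "g = mk2 (of_int x) (of_int y) 0 (of_int z)"
      unfolding S1_def by blast
    then show ?thesis by (intro exI[of _ 1] exI[of _ x] exI[of _ y] exI[of _ z]) simp
  next
    assume "g \<in> S2 m"
    then obtain x y z where "x > 0" "z > 0" "0 \<le> y" "y < z" "g = mk2 (of_int x / sqrt 2) (of_int y / sqrt 2) 0 (of_int z / sqrt 2)"
      unfolding S2_def by blast
    then show ?thesis by (intro exI[of _ "1 / sqrt 2"] exI[of _ x] exI[of _ y] exI[of _ z]) simp
  qed
qed

lemma s_cases: "(s = 1 \<or> s = 1 / sqrt 2) \<Longrightarrow> s > (0::real)" by auto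

lemma core:
  fixes x y z x' y' z' :: int and s t :: real
  assumes h: "h \<in> Gamma0_2 \<union> G2"
    and s: "s = 1 \<or> s = 1 / sqrt 2" and t: "t = 1 \<or> t = 1 / sqrt 2"
    and b1: "x > 0" "z > 0" "0 \<le> y" "y < z"
    and b2: "x' > 0" "z' > 0" "0 \<le> y'" "y' < z'"
    and eq: "mk2 (s * of_int x) (s * of_int y) 0 (s * of_int z) = h ** mk2 (t * of_int x') (t * of_int y') 0 (t * of_int z')"
  shows "s = t \<and> x = x' \<and> y = y' \<and> z = z'"
proof -
  have sp: "s > 0" and tp: "t > 0" using s t by auto
  show ?thesis
  proof (cases "h \<in> Gamma0_2")
    case False
    with h obtain a b c d where hh: "h = mk2 (sqrt 2 * of_int a) (of_int b / sqrt 2) (sqrt 2 * of_int c) (sqrt 2 * of_int d)" "2*a*d-b*c = 1"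
      unfolding G2_def by blast
    from eq have "0 = sqrt 2 * of_int c * (t * of_int x')"
      by (simp add: hh mk2_mult mk2_eq_iff)
    with tp b2 have "c = 0" by simp
    with hh(2) have "2*(a*d) = 1" by (simp add: mult.assoc)
    then have False by presburger
    then show ?thesis ..
  next
    case True
    then obtain a b c d where hh: "h = mk2 (of_int a) (of_int b) (of_int c) (of_int d)" "a*d-b*c = 1"
      unfolding Gamma0_2_def by blast
    from eq have e: "s * of_int x = of_int a * (t * of_int x')"
       "s * of_int y = of_int a * (t * of_int y') + of_int b * (t * of_int z')"
       "0 = of_int c * (t * of_int x')"
       "s * of_int z = of_int c * (t * of_int y') + of_int d * (t * of_int z')"
      by (simp_all add: hh mk2_mult mk2_eq_iff)
    with tp b2 have "c = 0" by simp
    with hh(2) have "a*d = 1" by simp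
    then have ad: "(a = 1 \<and> d = 1) \<or> (a = -1 \<and> d = -1)" by (simp add: zmult_eq_1_iff)
    have "a = 1"
    proof (rule ccontr)
      assume "a \<noteq> 1" with ad have "a = -1" by simp
      with e(1) have "s * of_int x = - (t * of_int x')" by simp
      moreover have "s * of_int x > 0" using sp b1 by simp
      moreover have "t * of_int x' > 0" using tp b2 by simp
      ultimately show False by linarith
    qed
    with ad have d1: "d = 1" by simp
    have ex: "s * of_int x = t * of_int x'" using e(1) `a = 1` by simp
    have ez: "s * of_int z = t * of_int z'" using e(4) `c = 0` d1 by simp
    have ey: "s * of_int y = t * of_int y' + of_int b * (t * of_int z')" using e(2) `a = 1` by simp
    have st: "s = t"
    proof (rule ccontr)
      assume "s \<noteq> t"
      with s t have "(s = 1 \<and> t = 1 / sqrt 2) \<or> (s = 1 / sqrt 2 \<and> t = 1)" by auto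
      then show False
      proof
        assume "s = 1 \<and> t = 1 / sqrt 2"
        with ex have "of_int x * sqrt 2 = of_int x'" by (simp add: field_simps)
        with no_sqrt2_real b1 show False by blast
      next
        assume "s = 1 / sqrt 2 \<and> t = 1"
        with ex have "of_int x' * sqrt 2 = of_int x" by (simp add: field_simps)
        with no_sqrt2_real b2 show False by blast
      qed
    qed
    have "x = x'" using ex st sp by simp
    moreover have "z = z'" using ez st sp by simp
    moreover have yy: "y = y' + b * z'"
    proof -
      have "t * of_int y = t * (of_int y' + of_int b * of_int z')" using ey st by (simp add: algebra_simps)
      then have "of_int y = (of_int y' + of_int b * of_int z' :: real)"
        using tp by simp
      then show ?thesis by (metis of_int_add of_int_mult of_int_eq_iff)
    qed
    moreover have "b = 0"
    proof -
      have "b * z' < 1 * z'" using yy b1 b2 `z = z'` by linarith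
      then have "b < 1" by (rule mult_right_less_imp_less) (use b2 in simp)
      moreover have "(-1) * z' < b * z'" using yy b1 b2 `z = z'` by linarith
      then have "-1 < b" by (rule mult_right_less_imp_less) (use b2 in simp)
      ultimately show ?thesis by simp
    qed
    ultimately show ?thesis using st yy by simp
  qed
qed

theorem lemma2p2:
  fixes m :: int
  assumes "m > 0" and "even m"
    and "\<gamma> \<in> Mm m" and "\<delta> \<in> Mm m" and "\<gamma> \<noteq> \<delta>"
  shows "right_coset Gamma0_2_plus \<gamma> \<noteq> right_coset Gamma0_2_plus \<delta>"
proof
  assume ceq: "right_coset Gamma0_2_plus \<gamma> = right_coset Gamma0_2_plus \<delta>"
  have "mat 1 \<in> Gamma0_2"
    by (rule G1I[of 1 1 0 0]) (simp_all add: mat1_mk2)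
  then have "mat 1 \<in> Gamma0_2_plus" by (rule Gamma0_2_plus.gen_Gamma)
  then have "\<gamma> \<in> right_coset Gamma0_2_plus \<gamma>" unfolding right_coset_def
    by (metis (mono_tags, lifting) matrix_mul_lid mem_Collect_eq)
  with ceq obtain h where hG: "h \<in> Gamma0_2_plus" and hg: "\<gamma> = h ** \<delta>"
    unfolding right_coset_def by blast
  from closed[OF hG] have h: "h \<in> Gamma0_2 \<union> G2" .
  obtain s x y z where g1: "(s = 1 \<or> s = 1 / sqrt 2)" "x > 0" "z > 0" "0 \<le> y" "y < z"
     "\<gamma> = mk2 (s * of_int x) (s * of_int y) 0 (s * of_int z)"
    using Mm_form[OF assms(3)] by blast
  obtain t x' y' z' where d1: "(t = 1 \<or> t = 1 / sqrt 2)" "x' > 0" "z' > 0" "0 \<le> y'" "y' < z'"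
     "\<delta> = mk2 (t * of_int x') (t * of_int y') 0 (t * of_int z')"
    using Mm_form[OF assms(4)] by blast
  have "s = t \<and> x = x' \<and> y = y' \<and> z = z'"
    by (rule core[OF h g1(1) d1(1) g1(2-5) d1(2-5)]) (use hg g1(6) d1(6) in simp)
  then have "\<gamma> = \<delta>" using g1(6) d1(6) by simp
  with assms(5) show False ..
qed

end
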